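(* A dual-convex $m\times n$ net in $I^3$ is flexible in $I^3$ if and only if it has a nontrivial isotropic isometric deformation consisting of $m\times n$ nets that are v-parallel to it.
   Context: $I^3$ is $\mathbb{R}^3$ with coordinates $(x,y,z)$; isotropic = parallel to the $z$-axis; top view $\overline P$ of $P=(x,y,z)$ is $(x,y)$. Isotropic congruences: maps $\mathbf{x}\mapsto A\mathbf{x}+\mathbf{b}$, $A=\begin{pmatrix}\cos\phi&-\sin\phi&0\\ \sin\phi&\cos\phi&0\\ c_1&c_2&1\end{pmatrix}$. Metric duality: point $P=(P^1,P^2,P^3)\leftrightarrow$ plane $P^*\colon z=P^1x+P^2y-P^3$. An $m\times n$ net: points $F_{ij}$, $0\le i\le m,0\le j\le n$, with $F_{ij},F_{i+1,j},F_{i+1,j+1},F_{i,j+1}$ consecutive vertices of a convex planar quadrilateral (face $p_{ij}$) for all $0\le i<m,0\le j<n$. Boundary vertices: $i\in\{0,m\}$ or $j\in\{0,n\}$; consecutive faces around non-boundary $F_{ij}$: $p_{i-1,j-1},p_{i,j-1},p_{ij},p_{i-1,j}$. Convex 4-hedral angle with vertex $O$: union of rays from $O$ meeting a convex quadrilateral in a plane not through $O$; flat angles: rays through one side; admissible: isotropic line through $O$ meets its interior. Dual-convex: $m,n\ge2$ and at each non-boundary vertex the four consecutive face planes are planes of four consecutive flat angles of an admissible convex 4-hedral angle. Two nets are v-parallel if vertices with equal indices have equal top views. Curvature at non-boundary vertex with consecutive faces $p_1..p_4$: $\Omega=\frac12\sum_{k=1}^4\det(\overline{p_k^*},\overline{p_{k+1}^*})$,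 $p_5=p_1$. An isotropic isometric deformation of a dual-convex net $F_{ij}$ is a continuous family of $m\times n$ nets $F_{ij}(t)$, $t\in[0,1]$, $F_{ij}(0)=F_{ij}$, with corresponding faces isotropically congruent and equal curvatures at corresponding non-boundary vertices; trivial if for each $t$ there is an isotropic congruence $C_t$ with $F_{ij}(t)=C_t(F_{ij})$ for all $i,j$. Flexible in $I^3$: has a nontrivial isotropic isometric deformation. *)

theory Defs
  imports "HOL-Analysis.Analysis"
begin

text \<open>Points of I^3 are vectors in real^3; coordinates x = v$1, y = v$2, z = v$3.
  The isotropic direction is the z-axis (axis 3 1).\<close>

type_synonym pt = "real^3"
type_synonym net_fun = "nat \<Rightarrow> nat \<Rightarrow> pt"

definition iso_matrix :: "real \<Rightarrow> real \<Rightarrow> real \<Rightarrow> real^3^3" where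
  "iso_matrix \<phi> c1 c2 =
     vector [vector [cos \<phi>, - sin \<phi>, 0], vector [sin \<phi>, cos \<phi>, 0], vector [c1, c2, 1]]"

definition is_iso_congruence :: "(pt \<Rightarrow> pt) \<Rightarrow> bool" where
  "is_iso_congruence C \<longleftrightarrow>
     (\<exists>\<phi> c1 c2 (b::pt). C = (\<lambda>x. iso_matrix \<phi> c1 c2 *v x + b))"

text \<open>Convex (non-degenerate) planar quadrilateral with consecutive vertices A, B, C, D:
  no three vertices collinear and the diagonals AC and BD meet (this forces planarity
  and convexity with the given cyclic order).\<close>

definition convex_quad :: "pt \<Rightarrow> pt \<Rightarrow> pt \<Rightarrow> pt \<Rightarrow> bool" where
  "convex_quad A B C D \<longleftrightarrow>
     \<not> collinear {A, B, C} \<and> \<not> collinear {B, C, D} \<and>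
     \<not> collinear {C, D, A} \<and> \<not> collinear {D, A, B} \<and>
     closed_segment A C \<inter> closed_segment B D \<noteq> {}"

definition is_net :: "nat \<Rightarrow> nat \<Rightarrow> net_fun \<Rightarrow> bool" where
  "is_net m n F \<longleftrightarrow>
     (\<forall>i<m. \<forall>j<n. convex_quad (F i j) (F (Suc i) j) (F (Suc i) (Suc j)) (F i (Suc j)))"

definition face_plane :: "net_fun \<Rightarrow> nat \<Rightarrow> nat \<Rightarrow> pt set" where
  "face_plane F i j = affine hull {F i j, F (Suc i) j, F (Suc i) (Suc j), F i (Suc j)}"

definition non_boundary :: "nat \<Rightarrow> nat \<Rightarrow> nat \<Rightarrow> nat \<Rightarrow> bool" where
  "non_boundary m n i j \<longleftrightarrow> 0 < i \<and> i < m \<and> 0 < j \<and> j < n"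

definition hedral_angle :: "pt \<Rightarrow> pt \<Rightarrow> pt \<Rightarrow> pt \<Rightarrow> pt \<Rightarrow> pt set" where
  "hedral_angle V Q1 Q2 Q3 Q4 =
     {V + t *\<^sub>R (q - V) | t q. 0 \<le> t \<and> q \<in> convex hull {Q1, Q2, Q3, Q4}}"

definition is_convex_hedral_angle :: "pt \<Rightarrow> pt \<Rightarrow> pt \<Rightarrow> pt \<Rightarrow> pt \<Rightarrow> bool" where
  "is_convex_hedral_angle V Q1 Q2 Q3 Q4 \<longleftrightarrow>
     convex_quad Q1 Q2 Q3 Q4 \<and> V \<notin> affine hull {Q1, Q2, Q3, Q4}"

definition admissible_angle :: "pt \<Rightarrow> pt \<Rightarrow> pt \<Rightarrow> pt \<Rightarrow> pt \<Rightarrow> bool" where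
  "admissible_angle V Q1 Q2 Q3 Q4 \<longleftrightarrow>
     is_convex_hedral_angle V Q1 Q2 Q3 Q4 \<and>
     (\<exists>s::real. V + s *\<^sub>R axis 3 1 \<in> interior (hedral_angle V Q1 Q2 Q3 Q4))"

text \<open>The plane of the flat angle through the side Qk Qk+1 is the affine hull of V, Qk, Qk+1.
  Consecutive faces around a non-boundary vertex F_ij: p_{i-1,j-1}, p_{i,j-1}, p_ij, p_{i-1,j}.\<close>
definition dual_convex :: "nat \<Rightarrow> nat \<Rightarrow> net_fun \<Rightarrow> bool" where
  "dual_convex m n F \<longleftrightarrow>
     2 \<le> m \<and> 2 \<le> n \<and> is_net m n F \<and>
     (\<forall>i j. non_boundary m n i j \<longrightarrow>
        (\<exists>Q1 Q2 Q3 Q4. admissible_angle (F i j) Q1 Q2 Q3 Q4 \<and>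
           face_plane F (i - 1) (j - 1) = affine hull {F i j, Q1, Q2} \<and>
           face_plane F i (j - 1) = affine hull {F i j, Q2, Q3} \<and>
           face_plane F i j = affine hull {F i j, Q3, Q4} \<and>
           face_plane F (i - 1) j = affine hull {F i j, Q4, Q1}))"

text \<open>For a non-isotropic plane z = a x + b y + c its metric dual is the point (a, b, -c),
  whose top view is (a, b). For face p_ij, with normal N = (B - A) x (C - A) computed from
  three of its (non-collinear) vertices, this top view is (-N1/N3, -N2/N3).\<close>
definition face_dual_top :: "net_fun \<Rightarrow> nat \<Rightarrow> nat \<Rightarrow> real \<times> real" where
  "face_dual_top F i j =
     (let N = cross3 (F (Suc i) j - F i j) (F i (Suc j) - F i j)
      in (- N$1 / N$3, - N$2 / N$3))"

definition det2 :: "real \<times> real \<Rightarrow> real \<times> real \<Rightarrow> real" where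
  "det2 u v = fst u * snd v - snd u * fst v"

definition curvature :: "net_fun \<Rightarrow> nat \<Rightarrow> nat \<Rightarrow> real" where
  "curvature F i j =
     (let p1 = face_dual_top F (i - 1) (j - 1); p2 = face_dual_top F i (j - 1);
          p3 = face_dual_top F i j; p4 = face_dual_top F (i - 1) j
      in (det2 p1 p2 + det2 p2 p3 + det2 p3 p4 + det2 p4 p1) / 2)"

definition iso_isometric_deformation ::
  "nat \<Rightarrow> nat \<Rightarrow> net_fun \<Rightarrow> (real \<Rightarrow> net_fun) \<Rightarrow> bool" where
  "iso_isometric_deformation m n F D \<longleftrightarrow>
     (\<forall>t\<in>{0..1}. is_net m n (D t)) \<and>
     (\<forall>i\<le>m. \<forall>j\<le>n. D 0 i j = F i j) \<and>
     (\<forall>i\<le>m. \<forall>j\<le>n. continuous_on {0..1} (\<lambda>t. D t i j)) \<and>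
     (\<forall>t\<in>{0..1}. \<forall>i<m. \<forall>j<n. \<exists>C. is_iso_congruence C \<and>
         C (F i j) = D t i j \<and> C (F (Suc i) j) = D t (Suc i) j \<and>
         C (F (Suc i) (Suc j)) = D t (Suc i) (Suc j) \<and> C (F i (Suc j)) = D t i (Suc j)) \<and>
     (\<forall>t\<in>{0..1}. \<forall>i j. non_boundary m n i j \<longrightarrow> curvature (D t) i j = curvature F i j)"

definition trivial_deformation :: "nat \<Rightarrow> nat \<Rightarrow> net_fun \<Rightarrow> (real \<Rightarrow> net_fun) \<Rightarrow> bool" where
  "trivial_deformation m n F D \<longleftrightarrow>
     (\<forall>t\<in>{0..1}. \<exists>C. is_iso_congruence C \<and> (\<forall>i\<le>m. \<forall>j\<le>n. D t i j = C (F i j)))"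

definition flexible_I3 :: "nat \<Rightarrow> nat \<Rightarrow> net_fun \<Rightarrow> bool" where
  "flexible_I3 m n F \<longleftrightarrow>
     (\<exists>D. iso_isometric_deformation m n F D \<and> \<not> trivial_deformation m n F D)"

definition v_parallel :: "nat \<Rightarrow> nat \<Rightarrow> net_fun \<Rightarrow> net_fun \<Rightarrow> bool" where
  "v_parallel m n G F \<longleftrightarrow> (\<forall>i\<le>m. \<forall>j\<le>n. G i j $ 1 = F i j $ 1 \<and> G i j $ 2 = F i j $ 2)"

end

theory Submission
  imports Defs
begin

lemma iso_matrix_mv:
  "iso_matrix \<phi> c1 c2 *v x = vector [cos \<phi> * x$1 - sin \<phi> * x$2, sin \<phi> * x$1 + cos \<phi> * x$2, c1*x$1 + c2*x$2 + x$3]"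
  by (simp add: iso_matrix_def matrix_vector_mult_def vec_eq_iff forall_3 sum_3)

definition rmap :: "real \<Rightarrow> real \<Rightarrow> real \<Rightarrow> real \<Rightarrow> real \<Rightarrow> real \<Rightarrow> real \<Rightarrow> pt \<Rightarrow> pt" where
  "rmap c s b1 b2 b3 d1 d2 x = vector [c*x$1 - s*x$2 + b1, s*x$1 + c*x$2 + b2, d1*x$1 + d2*x$2 + x$3 + b3]"

lemma rmap_comp [simp]:
  "rmap c s b1 b2 b3 d1 d2 x $ 1 = c*x$1 - s*x$2 + b1"
  "rmap c s b1 b2 b3 d1 d2 x $ 2 = s*x$1 + c*x$2 + b2"
  "rmap c s b1 b2 b3 d1 d2 x $ 3 = d1*x$1 + d2*x$2 + x$3 + b3"
  by (simp_all add: rmap_def)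

lemma iso_cong_iff:
  "is_iso_congruence C \<longleftrightarrow> (\<exists>\<phi> b1 b2 b3 d1 d2. C = rmap (cos \<phi>) (sin \<phi>) b1 b2 b3 d1 d2)"
proof
  assume "is_iso_congruence C"
  then obtain \<phi> c1 c2 b where C: "C = (\<lambda>x. iso_matrix \<phi> c1 c2 *v x + b)"
    unfolding is_iso_congruence_def by blast
  have "C = rmap (cos \<phi>) (sin \<phi>) (b$1) (b$2) (b$3) c1 c2"
    unfolding C by (auto simp: fun_eq_iff vec_eq_iff forall_3 iso_matrix_mv rmap_def)
  then show "\<exists>\<phi> b1 b2 b3 d1 d2. C = rmap (cos \<phi>) (sin \<phi>) b1 b2 b3 d1 d2" by blast
next
  assume "\<exists>\<phi> b1 b2 b3 d1 d2. C = rmap (cos \<phi>) (sin \<phi>) b1 b2 b3 d1 d2"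
  then obtain \<phi> b1 b2 b3 d1 d2 where C: "C = rmap (cos \<phi>) (sin \<phi>) b1 b2 b3 d1 d2" by blast
  have "C = (\<lambda>x. iso_matrix \<phi> d1 d2 *v x + vector [b1,b2,b3])"
    unfolding C by (auto simp: fun_eq_iff vec_eq_iff forall_3 iso_matrix_mv rmap_def)
  then show "is_iso_congruence C" unfolding is_iso_congruence_def by blast
qed

lemma iso_cong_comp:
  assumes "is_iso_congruence C1" "is_iso_congruence C2"
  shows "is_iso_congruence (\<lambda>x. C1 (C2 x))"
proof -
  obtain p b1 b2 b3 d1 d2 where C1: "C1 = rmap (cos p) (sin p) b1 b2 b3 d1 d2"
    using assms(1) iso_cong_iff by blast
  obtain q e1 e2 e3 f1 f2 where C2: "C2 = rmap (cos q) (sin q) e1 e2 e3 f1 f2"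
    using assms(2) iso_cong_iff by blast
  have "(\<lambda>x. C1 (C2 x)) = rmap (cos (p+q)) (sin (p+q))
     (cos p * e1 - sin p * e2 + b1) (sin p * e1 + cos p * e2 + b2) (d1*e1 + d2*e2 + e3 + b3)
     (d1 * cos q + d2 * sin q + f1) (- d1 * sin q + d2 * cos q + f2)"
    unfolding C1 C2 by (auto simp: fun_eq_iff vec_eq_iff forall_3 rmap_def cos_add sin_add algebra_simps)
  then show ?thesis using iso_cong_iff by blast
qed

lemma rmap_iso:
  assumes "c\<^sup>2 + s\<^sup>2 = 1"
  shows "is_iso_congruence (rmap c s b1 b2 b3 d1 d2)"
proof -
  obtain p where "c = cos p" "s = sin p" using sincos_total_2pi[OF assms] by metis
  then show ?thesis using iso_cong_iff by blast
qed

lemma motion_unique: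
  fixes c s e1 e2 c' s' e1' e2' x1 x2 y1 y2 :: real
  assumes "c*x1 - s*x2 + e1 = c'*x1 - s'*x2 + e1'"
    "s*x1 + c*x2 + e2 = s'*x1 + c'*x2 + e2'"
    "c*y1 - s*y2 + e1 = c'*y1 - s'*y2 + e1'"
    "s*y1 + c*y2 + e2 = s'*y1 + c'*y2 + e2'"
    "x1 \<noteq> y1 \<or> x2 \<noteq> y2"
  shows "c = c' \<and> s = s' \<and> e1 = e1' \<and> e2 = e2'"
proof -
  define dc where "dc = c - c'"
  define ds where "ds = s - s'"
  have h1: "dc*(x1-y1) - ds*(x2-y2) = 0" using assms(1,3) unfolding dc_def ds_def by (simp add: algebra_simps)
  have h2: "ds*(x1-y1) + dc*(x2-y2) = 0" using assms(2,4) unfolding dc_def ds_def by (simp add: algebra_simps)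
  have "(dc\<^sup>2 + ds\<^sup>2) * ((x1-y1)\<^sup>2 + (x2-y2)\<^sup>2) = (dc*(x1-y1) - ds*(x2-y2))\<^sup>2 + (ds*(x1-y1) + dc*(x2-y2))\<^sup>2"
    by (simp add: power2_eq_square algebra_simps)
  also have "\<dots> = 0" using h1 h2 by simp
  finally have "dc\<^sup>2 + ds\<^sup>2 = 0 \<or> (x1-y1)\<^sup>2 + (x2-y2)\<^sup>2 = 0" by simp
  moreover have "(x1-y1)\<^sup>2 + (x2-y2)\<^sup>2 \<noteq> 0" using assms(5) by (simp add: sum_power2_eq_zero_iff)
  ultimately have "dc = 0" "ds = 0" by (auto simp: sum_power2_eq_zero_iff)
  then show ?thesis using assms(1,2) unfolding dc_def ds_def by auto
qed

lemma seg_collinear: "x \<in> closed_segment a b \<Longrightarrow> collinear {a, b, x}"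
  by (rule collinear_subset[OF collinear_closed_segment[of a b]]) auto

lemma quad_sides:
  assumes "convex_quad Q1 Q2 Q3 Q4"
  shows "\<exists>s u. 0 < s \<and> 0 < u \<and> (1 - s) *\<^sub>R Q1 + s *\<^sub>R Q3 = (1 - u) *\<^sub>R Q2 + u *\<^sub>R Q4"
proof -
  from assms obtain X where X1: "X \<in> closed_segment Q1 Q3" and X2: "X \<in> closed_segment Q2 Q4"
    unfolding convex_quad_def by blast
  obtain s where s: "0 \<le> s" "s \<le> 1" "X = (1 - s) *\<^sub>R Q1 + s *\<^sub>R Q3" using X1 unfolding closed_segment_def by blast
  obtain u where u: "0 \<le> u" "u \<le> 1" "X = (1 - u) *\<^sub>R Q2 + u *\<^sub>R Q4" using X2 unfolding closed_segment_def by blast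
  have "s \<noteq> 0"
  proof
    assume "s = 0"
    then have "Q1 \<in> closed_segment Q2 Q4" using X2 s by simp
    then have "collinear {Q2, Q4, Q1}" by (rule seg_collinear)
    moreover have "{Q2, Q4, Q1} = {Q4, Q1, Q2}" by auto
    ultimately show False using assms unfolding convex_quad_def by simp
  qed
  moreover have "u \<noteq> 0"
  proof
    assume "u = 0"
    then have "Q2 \<in> closed_segment Q1 Q3" using X1 u by simp
    then have "collinear {Q1, Q3, Q2}" by (rule seg_collinear)
    moreover have "{Q1, Q3, Q2} = {Q1, Q2, Q3}" by auto
    ultimately show False using assms unfolding convex_quad_def by simp
  qed
  ultimately show ?thesis using s u by (metis order_le_less)
qed

lemma adm_N3:
  assumes "admissible_angle V Q1 Q2 Q3 Q4"
  shows "(cross3 (Q1 - V) (Q2 - V)) $ 3 \<noteq> 0"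
proof
  define N where "N = cross3 (Q1 - V) (Q2 - V)"
  assume N3: "N $ 3 = 0"
  have cq: "convex_quad Q1 Q2 Q3 Q4" and Vn: "V \<notin> affine hull {Q1, Q2, Q3, Q4}"
    using assms unfolding admissible_angle_def is_convex_hedral_angle_def by auto
  obtain z where zi: "V + z *\<^sub>R axis 3 1 \<in> interior (hedral_angle V Q1 Q2 Q3 Q4)"
    using assms unfolding admissible_angle_def by blast
  have Q12: "Q1 \<noteq> Q2" using cq unfolding convex_quad_def by auto
  have N0: "N \<noteq> 0"
  proof
    assume "N = 0"
    then have "collinear {0, Q1 - V, Q2 - V}" unfolding N_def by (simp add: cross_eq_0)
    then have "collinear {Q1, V, Q2}" by (subst collinear_3) auto
    moreover have "{Q1, V, Q2} = {Q1, Q2, V}" by auto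
    ultimately have "V \<in> affine hull {Q1, Q2}" using collinear_3_affine_hull[OF Q12] by simp
    moreover have "affine hull {Q1, Q2} \<subseteq> affine hull {Q1, Q2, Q3, Q4}" by (rule hull_mono) auto
    ultimately show False using Vn by blast
  qed
  define g where "g x = N \<bullet> (x - V)" for x
  have g1: "g Q1 = 0" and g2: "g Q2 = 0" unfolding g_def N_def by (simp_all add: dot_cross_self)
  obtain s u where su: "0 < s" "0 < u" "(1 - s) *\<^sub>R Q1 + s *\<^sub>R Q3 = (1 - u) *\<^sub>R Q2 + u *\<^sub>R Q4"
    using quad_sides[OF cq] by blast
  have "g ((1 - s) *\<^sub>R Q1 + s *\<^sub>R Q3) = (1 - s) * g Q1 + s * g Q3"
    unfolding g_def by (simp add: algebra_simps inner_diff_right)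
  moreover have "g ((1 - u) *\<^sub>R Q2 + u *\<^sub>R Q4) = (1 - u) * g Q2 + u * g Q4"
    unfolding g_def by (simp add: algebra_simps inner_diff_right)
  ultimately have eq: "s * g Q3 = u * g Q4" using su(3) g1 g2 by simp
  have "0 \<le> g Q3 * g Q4"
  proof -
    have "g Q3 = (u / s) * g Q4" using eq su by (simp add: field_simps)
    then have "g Q3 * g Q4 = (u / s) * (g Q4)\<^sup>2" by (simp add: power2_eq_square)
    then show ?thesis using su by simp
  qed
  then obtain \<sigma> :: real where sig: "\<sigma> = 1 \<or> \<sigma> = -1" "0 \<le> \<sigma> * g Q3" "0 \<le> \<sigma> * g Q4"
    by (metis mult_minus_left mult_1 neg_0_le_iff_le zero_le_mult_iff)
  let ?H = "{x. (\<sigma> *\<^sub>R N) \<bullet> x \<ge> (\<sigma> *\<^sub>R N) \<bullet> V}"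
  have gH: "x \<in> ?H \<longleftrightarrow> 0 \<le> \<sigma> * g x" for x
    unfolding g_def by (simp add: inner_diff_right algebra_simps)
  have "convex hull {Q1, Q2, Q3, Q4} \<subseteq> ?H"
  proof (rule hull_minimal)
    show "{Q1, Q2, Q3, Q4} \<subseteq> ?H" using g1 g2 sig gH by auto
  qed (rule convex_halfspace_ge)
  have hedH: "0 \<le> \<sigma> * g y" if yh: "y \<in> hedral_angle V Q1 Q2 Q3 Q4" for y
  proof -
    obtain t q where tq: "y = V + t *\<^sub>R (q - V)" "0 \<le> t" "q \<in> convex hull {Q1, Q2, Q3, Q4}"
      using yh unfolding hedral_angle_def by blast
    have "0 \<le> \<sigma> * g q" using tq(3) \<open>convex hull {Q1, Q2, Q3, Q4} \<subseteq> ?H\<close> gH by blast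
    moreover have "g y = t * g q" unfolding tq(1) g_def by (simp add: inner_diff_right)
    ultimately show ?thesis using tq(2) by (metis mult.left_commute zero_le_mult_iff)
  qed
  let ?z = "V + z *\<^sub>R axis 3 1"
  obtain e where e: "e > 0" "ball ?z e \<subseteq> hedral_angle V Q1 Q2 Q3 Q4"
    using zi by (meson mem_interior)
  have gz: "g ?z = 0" unfolding g_def using N3 by (simp add: inner_axis)
  define y where "y = ?z - (e / (2 * norm N) * \<sigma>) *\<^sub>R N"
  have "dist ?z y = e / 2" unfolding y_def dist_norm using N0 sig(1) e(1) by auto
  then have "y \<in> hedral_angle V Q1 Q2 Q3 Q4" using e by auto
  then have "0 \<le> \<sigma> * g y" by (rule hedH)
  moreover have "\<sigma> * g y = - (e / (2 * norm N)) * (N \<bullet> N)"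
  proof -
    have "g y = g ?z - (e / (2 * norm N) * \<sigma>) * (N \<bullet> N)"
      unfolding y_def g_def by (simp add: algebra_simps inner_diff_right)
    then show ?thesis using gz sig(1) by auto
  qed
  moreover have "N \<bullet> N > 0" using N0 by simp
  moreover have "e / (2 * norm N) > 0" using e(1) N0 by simp
  ultimately have A: "0 \<le> - (e / (2 * norm N)) * (N \<bullet> N)" and B: "N \<bullet> N > 0" and C: "e / (2 * norm N) > 0" by auto
  have "0 < (e / (2 * norm N)) * (N \<bullet> N)" by (rule mult_pos_pos[OF C B])
  then show False using A by linarith
qed

lemma adm_nonvert:
  assumes "admissible_angle V Q1 Q2 Q3 Q4"
    and "p \<in> affine hull {V, Q1, Q2}" "q \<in> affine hull {V, Q1, Q2}"
    and "p$1 = q$1" "p$2 = q$2"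
  shows "p = q"
proof -
  define N where "N = cross3 (Q1 - V) (Q2 - V)"
  have N3: "N $ 3 \<noteq> 0" using adm_N3[OF assms(1)] N_def by simp
  have "affine hull {V, Q1, Q2} \<subseteq> {x. N \<bullet> x = N \<bullet> V}"
  proof (rule hull_minimal)
    have "N \<bullet> (Q1 - V) = 0" "N \<bullet> (Q2 - V) = 0" unfolding N_def by (simp_all add: dot_cross_self)
    then show "{V, Q1, Q2} \<subseteq> {x. N \<bullet> x = N \<bullet> V}" by (auto simp: inner_diff_right)
  qed (rule affine_hyperplane)
  then have "N \<bullet> p = N \<bullet> q" using assms(2,3) by (metis (mono_tags, lifting) mem_Collect_eq subsetD)
  then have "N$1 * p$1 + N$2 * p$2 + N$3 * p$3 = N$1 * q$1 + N$2 * q$2 + N$3 * q$3"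
    by (simp add: inner_vec_def sum_3)
  then have "p$3 = q$3" using N3 assms(4,5) by simp
  then show ?thesis using assms(4,5) by (simp add: vec_eq_iff forall_3)
qed

lemma adm_rot:
  assumes "admissible_angle V Q1 Q2 Q3 Q4"
  shows "admissible_angle V Q2 Q3 Q4 Q1"
proof -
  have S: "{Q2, Q3, Q4, Q1} = {Q1, Q2, Q3, Q4}" by auto
  have cq: "convex_quad Q2 Q3 Q4 Q1 = convex_quad Q1 Q2 Q3 Q4"
    unfolding convex_quad_def
    by (metis (no_types, lifting) closed_segment_commute inf_commute insert_commute)
  have h: "hedral_angle V Q2 Q3 Q4 Q1 = hedral_angle V Q1 Q2 Q3 Q4"
    unfolding hedral_angle_def S ..
  show ?thesis using assms unfolding admissible_angle_def is_convex_hedral_angle_def cq h S by simp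
qed

lemma nb_face:
  assumes "dual_convex m n F" "non_boundary m n i j"
    "p \<in> affine hull {F i j, Q1, Q2}" "q \<in> affine hull {F i j, Q1, Q2}"
    "p$1 = q$1" "p$2 = q$2"
    "admissible_angle (F i j) Q1 Q2 Q3 Q4"
  shows "p = q"
  using adm_nonvert[OF assms(7) assms(3,4,5,6)] .

lemma face_nonvert:
  assumes dc: "dual_convex m n F" and ij: "i < m" "j < n"
    and pq: "p \<in> face_plane F i j" "q \<in> face_plane F i j" "p$1 = q$1" "p$2 = q$2"
  shows "p = q"
proof -
  have m2: "2 \<le> m" and n2: "2 \<le> n" using dc unfolding dual_convex_def by auto
  define i' where "i' = (if i = 0 then 1 else i)"
  define j' where "j' = (if j = 0 then 1 else j)"
  have nb: "non_boundary m n i' j'" unfolding non_boundary_def i'_def j'_def using m2 n2 ij by auto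
  then obtain Q1 Q2 Q3 Q4 where adm: "admissible_angle (F i' j') Q1 Q2 Q3 Q4" and
     f1: "face_plane F (i' - 1) (j' - 1) = affine hull {F i' j', Q1, Q2}" and
     f2: "face_plane F i' (j' - 1) = affine hull {F i' j', Q2, Q3}" and
     f3: "face_plane F i' j' = affine hull {F i' j', Q3, Q4}" and
     f4: "face_plane F (i' - 1) j' = affine hull {F i' j', Q4, Q1}"
    using dc unfolding dual_convex_def by blast
  have adm2: "admissible_angle (F i' j') Q2 Q3 Q4 Q1" by (rule adm_rot[OF adm])
  have adm3: "admissible_angle (F i' j') Q3 Q4 Q1 Q2" by (rule adm_rot[OF adm2])
  have adm4: "admissible_angle (F i' j') Q4 Q1 Q2 Q3" by (rule adm_rot[OF adm3])
  consider "i = 0" "j = 0" | "i = 0" "j \<noteq> 0" | "i \<noteq> 0" "j = 0" | "i \<noteq> 0" "j \<noteq> 0" by blast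
  then show ?thesis
  proof cases
    case 1
    then have "face_plane F i j = affine hull {F i' j', Q1, Q2}" using f1 unfolding i'_def j'_def by simp
    then show ?thesis using adm_nonvert[OF adm] pq by auto
  next
    case 2
    then have "face_plane F i j = affine hull {F i' j', Q4, Q1}" using f4 unfolding i'_def j'_def by simp
    then show ?thesis using adm_nonvert[OF adm4] pq by auto
  next
    case 3
    then have "face_plane F i j = affine hull {F i' j', Q2, Q3}" using f2 unfolding i'_def j'_def by simp
    then show ?thesis using adm_nonvert[OF adm2] pq by auto
  next
    case 4
    then have "face_plane F i j = affine hull {F i' j', Q3, Q4}" using f3 unfolding i'_def j'_def by simp
    then show ?thesis using adm_nonvert[OF adm3] pq by auto
  qed
qed

lemma quad_distinct:
  assumes "convex_quad A B C D"
  shows "A \<noteq> B" "B \<noteq> C" "C \<noteq> D" "D \<noteq> A"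
  using assms unfolding convex_quad_def by auto

lemma face_top_distinct:
  assumes dc: "dual_convex m n F" and ij: "i < m" "j < n"
  shows "F (Suc i) j $ 1 \<noteq> F (Suc i) (Suc j) $ 1 \<or> F (Suc i) j $ 2 \<noteq> F (Suc i) (Suc j) $ 2"
    "F i (Suc j) $ 1 \<noteq> F (Suc i) (Suc j) $ 1 \<or> F i (Suc j) $ 2 \<noteq> F (Suc i) (Suc j) $ 2"
    "F i j $ 1 \<noteq> F (Suc i) j $ 1 \<or> F i j $ 2 \<noteq> F (Suc i) j $ 2"
proof -
  have cq: "convex_quad (F i j) (F (Suc i) j) (F (Suc i) (Suc j)) (F i (Suc j))"
    using dc ij unfolding dual_convex_def is_net_def by blast
  note d = quad_distinct[OF cq]
  have mem: "F i j \<in> face_plane F i j" "F (Suc i) j \<in> face_plane F i j"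
     "F (Suc i) (Suc j) \<in> face_plane F i j" "F i (Suc j) \<in> face_plane F i j"
    unfolding face_plane_def by (simp_all add: hull_inc)
  show "F (Suc i) j $ 1 \<noteq> F (Suc i) (Suc j) $ 1 \<or> F (Suc i) j $ 2 \<noteq> F (Suc i) (Suc j) $ 2"
    using face_nonvert[OF dc ij mem(2) mem(3)] d by blast
  show "F i (Suc j) $ 1 \<noteq> F (Suc i) (Suc j) $ 1 \<or> F i (Suc j) $ 2 \<noteq> F (Suc i) (Suc j) $ 2"
    using face_nonvert[OF dc ij mem(4) mem(3)] d by metis
  show "F i j $ 1 \<noteq> F (Suc i) j $ 1 \<or> F i j $ 2 \<noteq> F (Suc i) j $ 2"
    using face_nonvert[OF dc ij mem(1) mem(2)] d by blast
qed

definition okp :: "real \<Rightarrow> real \<Rightarrow> pt \<Rightarrow> pt \<Rightarrow> pt \<Rightarrow> pt \<Rightarrow> bool" where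
  "okp c s P Q X Y \<longleftrightarrow> Y$1 = c*(X$1 - P$1) - s*(X$2 - P$2) + Q$1 \<and> Y$2 = s*(X$1 - P$1) + c*(X$2 - P$2) + Q$2"

definition ccp :: "pt \<Rightarrow> pt \<Rightarrow> pt \<Rightarrow> pt \<Rightarrow> real" where
  "ccp X0 X1 Y0 Y1 = ((X1$1-X0$1)*(Y1$1-Y0$1) + (X1$2-X0$2)*(Y1$2-Y0$2)) / ((X1$1-X0$1)\<^sup>2 + (X1$2-X0$2)\<^sup>2)"

definition ssp :: "pt \<Rightarrow> pt \<Rightarrow> pt \<Rightarrow> pt \<Rightarrow> real" where
  "ssp X0 X1 Y0 Y1 = ((X1$1-X0$1)*(Y1$2-Y0$2) - (X1$2-X0$2)*(Y1$1-Y0$1)) / ((X1$1-X0$1)\<^sup>2 + (X1$2-X0$2)\<^sup>2)"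

lemma base_pts:
  assumes C: "is_iso_congruence C" and Y0: "Y0 = C X0" and Y1: "Y1 = C X1"
    and d: "X0$1 \<noteq> X1$1 \<or> X0$2 \<noteq> X1$2" and Y: "Y = C X"
  shows "okp (ccp X0 X1 Y0 Y1) (ssp X0 X1 Y0 Y1) X0 Y0 X Y"
    "(ccp X0 X1 Y0 Y1)\<^sup>2 + (ssp X0 X1 Y0 Y1)\<^sup>2 = 1"
proof -
  obtain p b1 b2 b3 d1 d2 where Ce: "C = rmap (cos p) (sin p) b1 b2 b3 d1 d2"
    using C iso_cong_iff by blast
  define w1 where "w1 = X1$1 - X0$1"
  define w2 where "w2 = X1$2 - X0$2"
  have nw: "w1\<^sup>2 + w2\<^sup>2 \<noteq> 0" using d unfolding w1_def w2_def by (auto simp: sum_power2_eq_zero_iff)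
  have u1: "Y1$1 - Y0$1 = cos p * w1 - sin p * w2" unfolding Y0 Y1 Ce w1_def w2_def by (simp add: algebra_simps)
  have u2: "Y1$2 - Y0$2 = sin p * w1 + cos p * w2" unfolding Y0 Y1 Ce w1_def w2_def by (simp add: algebra_simps)
  have cc: "ccp X0 X1 Y0 Y1 = cos p"
  proof -
    have "ccp X0 X1 Y0 Y1 = (w1 * (cos p * w1 - sin p * w2) + w2 * (sin p * w1 + cos p * w2)) / (w1\<^sup>2 + w2\<^sup>2)"
      by (simp only: ccp_def u1 u2 w1_def[symmetric] w2_def[symmetric])
    also have "\<dots> = cos p * (w1\<^sup>2 + w2\<^sup>2) / (w1\<^sup>2 + w2\<^sup>2)" by (simp add: power2_eq_square algebra_simps)
    finally show ?thesis using nw by auto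
  qed
  have ss: "ssp X0 X1 Y0 Y1 = sin p"
  proof -
    have "ssp X0 X1 Y0 Y1 = (w1 * (sin p * w1 + cos p * w2) - w2 * (cos p * w1 - sin p * w2)) / (w1\<^sup>2 + w2\<^sup>2)"
      by (simp only: ssp_def u1 u2 w1_def[symmetric] w2_def[symmetric])
    also have "\<dots> = sin p * (w1\<^sup>2 + w2\<^sup>2) / (w1\<^sup>2 + w2\<^sup>2)" by (simp add: power2_eq_square algebra_simps)
    finally show ?thesis using nw by auto
  qed
  show "okp (ccp X0 X1 Y0 Y1) (ssp X0 X1 Y0 Y1) X0 Y0 X Y"
    unfolding okp_def cc ss unfolding Y Y0 Ce by (simp add: algebra_simps)
  show "(ccp X0 X1 Y0 Y1)\<^sup>2 + (ssp X0 X1 Y0 Y1)\<^sup>2 = 1" unfolding cc ss by simp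
qed

lemma step_pts:
  assumes C: "is_iso_congruence C" and o1: "okp c s P Q X1 Y1" and o2: "okp c s P Q X2 Y2"
    and Y1: "Y1 = C X1" and Y2: "Y2 = C X2" and d: "X1$1 \<noteq> X2$1 \<or> X1$2 \<noteq> X2$2" and Y: "Y = C X"
  shows "okp c s P Q X Y"
proof -
  obtain p b1 b2 b3 d1 d2 where Ce: "C = rmap (cos p) (sin p) b1 b2 b3 d1 d2"
    using C iso_cong_iff by blast
  define e1 where "e1 = Q$1 - c * P$1 + s * P$2"
  define e2 where "e2 = Q$2 - s * P$1 - c * P$2"
  have "c = cos p \<and> s = sin p \<and> e1 = b1 \<and> e2 = b2"
    apply (rule motion_unique[of c "X1$1" s "X1$2" e1 "cos p" "sin p" b1 e2 b2 "X2$1" "X2$2"])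
    using o1 o2 d unfolding okp_def Y1 Y2 Ce e1_def e2_def by (simp_all add: algebra_simps)
  then have hc: "cos p = c" "sin p = s" "b1 = e1" "b2 = e2" by auto
  show ?thesis unfolding okp_def Y Ce hc e1_def e2_def by (simp add: algebra_simps)
qed

definition face_ok :: "real \<Rightarrow> real \<Rightarrow> net_fun \<Rightarrow> net_fun \<Rightarrow> nat \<Rightarrow> nat \<Rightarrow> bool" where
  "face_ok c s F G i j \<longleftrightarrow> okp c s (F 0 0) (G 0 0) (F i j) (G i j) \<and>
     okp c s (F 0 0) (G 0 0) (F (Suc i) j) (G (Suc i) j) \<and>
     okp c s (F 0 0) (G 0 0) (F (Suc i) (Suc j)) (G (Suc i) (Suc j)) \<and>
     okp c s (F 0 0) (G 0 0) (F i (Suc j)) (G i (Suc j))"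

lemma global_motion:
  assumes dc: "dual_convex m n F"
    and cong: "\<forall>i<m. \<forall>j<n. \<exists>C. is_iso_congruence C \<and>
         C (F i j) = G i j \<and> C (F (Suc i) j) = G (Suc i) j \<and>
         C (F (Suc i) (Suc j)) = G (Suc i) (Suc j) \<and> C (F i (Suc j)) = G i (Suc j)"
  defines "c \<equiv> ccp (F 0 0) (F 1 0) (G 0 0) (G 1 0)"
    and "s \<equiv> ssp (F 0 0) (F 1 0) (G 0 0) (G 1 0)"
  shows "c\<^sup>2 + s\<^sup>2 = 1" "\<forall>i\<le>m. \<forall>j\<le>n. okp c s (F 0 0) (G 0 0) (F i j) (G i j)"
proof -
  have m2: "2 \<le> m" and n2: "2 \<le> n" using dc unfolding dual_convex_def by auto
  obtain C0 where C0: "is_iso_congruence C0" "C0 (F 0 0) = G 0 0" "C0 (F 1 0) = G 1 0"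
      "C0 (F 1 1) = G 1 1" "C0 (F 0 1) = G 0 1"
    using cong m2 n2 by fastforce
  have d0: "F 0 0 $ 1 \<noteq> F 1 0 $ 1 \<or> F 0 0 $ 2 \<noteq> F 1 0 $ 2"
    using face_top_distinct(3)[OF dc, of 0 0] m2 n2 by simp
  show "c\<^sup>2 + s\<^sup>2 = 1" unfolding c_def s_def
    using base_pts(2)[OF C0(1) C0(2)[symmetric] C0(3)[symmetric] d0] by blast
  have f00: "face_ok c s F G 0 0" unfolding face_ok_def c_def s_def
    using base_pts(1)[OF C0(1) C0(2)[symmetric] C0(3)[symmetric] d0 C0(2)[symmetric]]
      base_pts(1)[OF C0(1) C0(2)[symmetric] C0(3)[symmetric] d0 C0(3)[symmetric]]
      base_pts(1)[OF C0(1) C0(2)[symmetric] C0(3)[symmetric] d0 C0(4)[symmetric]]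
      base_pts(1)[OF C0(1) C0(2)[symmetric] C0(3)[symmetric] d0 C0(5)[symmetric]]
    by simp
  have stepj: "face_ok c s F G i (Suc j)" if th: "face_ok c s F G i j" "i < m" "Suc j < n" for i j
  proof -
    obtain C where C: "is_iso_congruence C" "C (F i (Suc j)) = G i (Suc j)" "C (F (Suc i) (Suc j)) = G (Suc i) (Suc j)"
      "C (F (Suc i) (Suc (Suc j))) = G (Suc i) (Suc (Suc j))" "C (F i (Suc (Suc j))) = G i (Suc (Suc j))"
      using cong th(2,3) by blast
    have d: "F i (Suc j) $ 1 \<noteq> F (Suc i) (Suc j) $ 1 \<or> F i (Suc j) $ 2 \<noteq> F (Suc i) (Suc j) $ 2"
      using face_top_distinct(2)[OF dc, of i j] th by simp
    have o1: "okp c s (F 0 0) (G 0 0) (F i (Suc j)) (G i (Suc j))"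
     and o2: "okp c s (F 0 0) (G 0 0) (F (Suc i) (Suc j)) (G (Suc i) (Suc j))"
      using th(1) unfolding face_ok_def by auto
    have sp: "okp c s (F 0 0) (G 0 0) X (C X)" for X
      using step_pts[OF C(1) o1 o2 C(2)[symmetric] C(3)[symmetric] d refl] .
    show ?thesis unfolding face_ok_def
      using sp[of "F i (Suc j)"] sp[of "F (Suc i) (Suc j)"] sp[of "F (Suc i) (Suc (Suc j))"] sp[of "F i (Suc (Suc j))"] C by simp
  qed
  have stepi: "face_ok c s F G (Suc i) j" if th: "face_ok c s F G i j" "Suc i < m" "j < n" for i j
  proof -
    obtain C where C: "is_iso_congruence C" "C (F (Suc i) j) = G (Suc i) j" "C (F (Suc (Suc i)) j) = G (Suc (Suc i)) j"
      "C (F (Suc (Suc i)) (Suc j)) = G (Suc (Suc i)) (Suc j)" "C (F (Suc i) (Suc j)) = G (Suc i) (Suc j)"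
      using cong th(2,3) by blast
    have d: "F (Suc i) j $ 1 \<noteq> F (Suc i) (Suc j) $ 1 \<or> F (Suc i) j $ 2 \<noteq> F (Suc i) (Suc j) $ 2"
      using face_top_distinct(1)[OF dc, of i j] th by simp
    have o1: "okp c s (F 0 0) (G 0 0) (F (Suc i) j) (G (Suc i) j)"
     and o2: "okp c s (F 0 0) (G 0 0) (F (Suc i) (Suc j)) (G (Suc i) (Suc j))"
      using th(1) unfolding face_ok_def by auto
    have sp: "okp c s (F 0 0) (G 0 0) X (C X)" for X
      using step_pts[OF C(1) o1 o2 C(2)[symmetric] C(5)[symmetric] d refl] .
    show ?thesis unfolding face_ok_def
      using sp[of "F (Suc i) j"] sp[of "F (Suc (Suc i)) j"] sp[of "F (Suc (Suc i)) (Suc j)"] sp[of "F (Suc i) (Suc j)"] C by simp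
  qed
  have row0: "\<forall>j<n. face_ok c s F G 0 j"
  proof (intro allI impI)
    fix j assume "j < n" then show "face_ok c s F G 0 j"
      by (induction j) (use f00 stepj m2 in auto)
  qed
  have all: "\<forall>j<n. face_ok c s F G i j" if "i < m" for i
    using that by (induction i) (use row0 stepi in auto)
  show "\<forall>i\<le>m. \<forall>j\<le>n. okp c s (F 0 0) (G 0 0) (F i j) (G i j)"
  proof (intro allI impI)
    fix i j assume ij: "i \<le> m" "j \<le> n"
    define i' where "i' = (if i < m then i else m - 1)"
    define j' where "j' = (if j < n then j else n - 1)"
    have "face_ok c s F G i' j'" using all[of i'] m2 n2 unfolding i'_def j'_def by auto
    moreover have "i = i' \<or> i = Suc i'" "j = j' \<or> j = Suc j'" unfolding i'_def j'_def using ij m2 n2 by auto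
    ultimately show "okp c s (F 0 0) (G 0 0) (F i j) (G i j)" unfolding face_ok_def by auto
  qed
qed

definition corr :: "real \<Rightarrow> real \<Rightarrow> pt \<Rightarrow> pt \<Rightarrow> pt \<Rightarrow> pt" where
  "corr c s P Q x = vector [c*(x$1-Q$1) + s*(x$2-Q$2) + P$1, -s*(x$1-Q$1) + c*(x$2-Q$2) + P$2, x$3]"

definition corrinv :: "real \<Rightarrow> real \<Rightarrow> pt \<Rightarrow> pt \<Rightarrow> pt \<Rightarrow> pt" where
  "corrinv c s P Q x = vector [c*(x$1-P$1) - s*(x$2-P$2) + Q$1, s*(x$1-P$1) + c*(x$2-P$2) + Q$2, x$3]"

lemma corr_rmap: "corr c s P Q = rmap c (-s) (P$1 - c*Q$1 - s*Q$2) (P$2 + s*Q$1 - c*Q$2) 0 0 0"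
  by (auto simp: fun_eq_iff vec_eq_iff forall_3 corr_def rmap_def algebra_simps)

lemma corrinv_rmap: "corrinv c s P Q = rmap c s (Q$1 - c*P$1 + s*P$2) (Q$2 - s*P$1 - c*P$2) 0 0 0"
  by (auto simp: fun_eq_iff vec_eq_iff forall_3 corrinv_def rmap_def algebra_simps)

lemma corr_iso: "c\<^sup>2 + s\<^sup>2 = 1 \<Longrightarrow> is_iso_congruence (corr c s P Q)"
  unfolding corr_rmap by (rule rmap_iso) simp

lemma corrinv_iso: "c\<^sup>2 + s\<^sup>2 = 1 \<Longrightarrow> is_iso_congruence (corrinv c s P Q)"
  unfolding corrinv_rmap by (rule rmap_iso) simp

lemma corrinv_corr:
  assumes "c\<^sup>2 + s\<^sup>2 = 1"
  shows "corrinv c s P Q (corr c s P Q x) = x"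
proof -
  have "c * (c * a + s * b) - s * (- (s * a) + c * b) = (c\<^sup>2 + s\<^sup>2) * a"
       "s * (c * a + s * b) + c * (- (s * a) + c * b) = (c\<^sup>2 + s\<^sup>2) * b" for a b
    by (simp_all add: power2_eq_square algebra_simps)
  then show ?thesis using assms by (simp add: corr_def corrinv_def vec_eq_iff forall_3)
qed

lemma corr_okp:
  assumes "c\<^sup>2 + s\<^sup>2 = 1" "okp c s P Q X Y"
  shows "corr c s P Q Y $ 1 = X $ 1" "corr c s P Q Y $ 2 = X $ 2"
proof -
  have "c * (c * a - s * b) + s * (s * a + c * b) = (c\<^sup>2 + s\<^sup>2) * a"
       "- s * (c * a - s * b) + c * (s * a + c * b) = (c\<^sup>2 + s\<^sup>2) * b" for a b
    by (simp_all add: power2_eq_square algebra_simps)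
  then show "corr c s P Q Y $ 1 = X $ 1" "corr c s P Q Y $ 2 = X $ 2"
    using assms unfolding okp_def corr_def by simp_all
qed

lemma collinear_rmap:
  assumes "collinear S"
  shows "collinear (rmap c s b1 b2 b3 d1 d2 ` S)"
proof -
  obtain u where u: "\<forall>x\<in>S. \<forall>y\<in>S. \<exists>k. x - y = k *\<^sub>R u" using assms unfolding collinear_def by blast
  have "\<forall>x\<in>rmap c s b1 b2 b3 d1 d2 ` S. \<forall>y\<in>rmap c s b1 b2 b3 d1 d2 ` S. \<exists>k. x - y = k *\<^sub>R rmap c s 0 0 0 d1 d2 u"
  proof (intro ballI)
    fix x y assume "x \<in> rmap c s b1 b2 b3 d1 d2 ` S" "y \<in> rmap c s b1 b2 b3 d1 d2 ` S"
    then obtain x' y' where xy: "x' \<in> S" "y' \<in> S" "x = rmap c s b1 b2 b3 d1 d2 x'" "y = rmap c s b1 b2 b3 d1 d2 y'" by blast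
    obtain k where k: "x' - y' = k *\<^sub>R u" using u xy by blast
    then have k1: "x'$1 = y'$1 + k * u$1" and k2: "x'$2 = y'$2 + k * u$2" and k3: "x'$3 = y'$3 + k * u$3"
      using arg_cong[OF k, of "\<lambda>v. v$1"] arg_cong[OF k, of "\<lambda>v. v$2"] arg_cong[OF k, of "\<lambda>v. v$3"]
      by (simp_all add: algebra_simps)
    have "x - y = k *\<^sub>R rmap c s 0 0 0 d1 d2 u"
      unfolding xy vec_eq_iff forall_3 rmap_comp by (simp add: k1 k2 k3 algebra_simps)
    then show "\<exists>k. x - y = k *\<^sub>R rmap c s 0 0 0 d1 d2 u" by blast
  qed
  then show ?thesis unfolding collinear_def by blast
qed

lemma rmap_comb:
  "rmap c s b1 b2 b3 d1 d2 ((1 - u) *\<^sub>R A + u *\<^sub>R B) = (1 - u) *\<^sub>R rmap c s b1 b2 b3 d1 d2 A + u *\<^sub>R rmap c s b1 b2 b3 d1 d2 B"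
  by (simp add: vec_eq_iff forall_3 algebra_simps)

lemma quad_pres:
  assumes K: "K = rmap c s b1 b2 b3 d1 d2" and K': "K' = rmap c' s' b1' b2' b3' d1' d2'"
    and inv: "\<And>x. K' (K x) = x" and q: "convex_quad A B C D"
  shows "convex_quad (K A) (K B) (K C) (K D)"
proof -
  have nc: "\<not> collinear {K X, K Y, K Z}" if "\<not> collinear {X, Y, Z}" for X Y Z
  proof
    assume "collinear {K X, K Y, K Z}"
    then have c: "collinear (K' ` {K X, K Y, K Z})" unfolding K' by (rule collinear_rmap)
    have eq: "K' ` {K X, K Y, K Z} = {X, Y, Z}" by (simp only: image_insert image_empty inv)
    show False using c[unfolded eq] that by contradiction
  qed
  have seg: "K x \<in> closed_segment (K a) (K b)" if xs: "x \<in> closed_segment a b" for x a b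
  proof -
    obtain u where u: "0 \<le> u" "u \<le> 1" "x = (1 - u) *\<^sub>R a + u *\<^sub>R b" using xs unfolding closed_segment_def by blast
    have "K x = (1 - u) *\<^sub>R K a + u *\<^sub>R K b" unfolding u(3) K by (rule rmap_comb)
    then show ?thesis using u(1,2) unfolding closed_segment_def by blast
  qed
  from q obtain X where "X \<in> closed_segment A C" "X \<in> closed_segment B D" unfolding convex_quad_def by blast
  then have "K X \<in> closed_segment (K A) (K C) \<inter> closed_segment (K B) (K D)" using seg by blast
  then have ne: "closed_segment (K A) (K C) \<inter> closed_segment (K B) (K D) \<noteq> {}" by blast
  have q': "\<not> collinear {A, B, C}" "\<not> collinear {B, C, D}" "\<not> collinear {C, D, A}" "\<not> collinear {D, A, B}"
    using q unfolding convex_quad_def by auto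
  show ?thesis unfolding convex_quad_def using nc[OF q'(1)] nc[OF q'(2)] nc[OF q'(3)] nc[OF q'(4)] ne by blast
qed

lemma det2_rot:
  assumes "c\<^sup>2 + s\<^sup>2 = 1"
  shows "det2 (c * fst p - s * snd p, s * fst p + c * snd p) (c * fst q - s * snd q, s * fst q + c * snd q) = det2 p q"
proof -
  have "det2 (c * fst p - s * snd p, s * fst p + c * snd p) (c * fst q - s * snd q, s * fst q + c * snd q)
     = (c\<^sup>2 + s\<^sup>2) * det2 p q" unfolding det2_def by (simp add: power2_eq_square algebra_simps)
  then show ?thesis using assms by simp
qed

lemma fdt_rmap:
  assumes cs: "c\<^sup>2 + s\<^sup>2 = 1"
  shows "face_dual_top (\<lambda>i j. rmap c s b1 b2 b3 0 0 (H i j)) i j =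
    (c * fst (face_dual_top H i j) - s * snd (face_dual_top H i j),
     s * fst (face_dual_top H i j) + c * snd (face_dual_top H i j))"
proof -
  define u where "u = H (Suc i) j - H i j"
  define v where "v = H i (Suc j) - H i j"
  define K where "K = rmap c s b1 b2 b3 0 0"
  have Ku: "K (H (Suc i) j) - K (H i j) = vector [c * u$1 - s * u$2, s * u$1 + c * u$2, u$3]"
    unfolding K_def u_def by (simp add: vec_eq_iff forall_3 algebra_simps)
  have Kv: "K (H i (Suc j)) - K (H i j) = vector [c * v$1 - s * v$2, s * v$1 + c * v$2, v$3]"
    unfolding K_def v_def by (simp add: vec_eq_iff forall_3 algebra_simps)
  define N where "N = cross3 u v"
  have N1: "cross3 (K (H (Suc i) j) - K (H i j)) (K (H i (Suc j)) - K (H i j)) $ 1 = c * N$1 - s * N$2"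
    unfolding Ku Kv N_def cross_components by (simp add: algebra_simps)
  have N2: "cross3 (K (H (Suc i) j) - K (H i j)) (K (H i (Suc j)) - K (H i j)) $ 2 = s * N$1 + c * N$2"
    unfolding Ku Kv N_def cross_components by (simp add: algebra_simps)
  have "cross3 (K (H (Suc i) j) - K (H i j)) (K (H i (Suc j)) - K (H i j)) $ 3 = (c\<^sup>2 + s\<^sup>2) * N$3"
    unfolding Ku Kv N_def cross_components by (simp add: power2_eq_square algebra_simps)
  then have N3: "cross3 (K (H (Suc i) j) - K (H i j)) (K (H i (Suc j)) - K (H i j)) $ 3 = N$3" using cs by simp
  have fd: "face_dual_top H i j = (- N$1 / N$3, - N$2 / N$3)"
    unfolding face_dual_top_def N_def u_def v_def Let_def ..
  show ?thesis
    unfolding K_def[symmetric] fd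
    unfolding face_dual_top_def Let_def N1 N2 N3
    by (cases "N$3 = 0") (simp_all add: field_simps)
qed

lemma curv_rmap:
  assumes cs: "c\<^sup>2 + s\<^sup>2 = 1"
  shows "curvature (\<lambda>i j. rmap c s b1 b2 b3 0 0 (H i j)) i j = curvature H i j"
  unfolding curvature_def Let_def fdt_rmap[OF cs] det2_rot[OF cs] ..

lemma vector3_axis: "vector [a, b, c] = a *\<^sub>R axis 1 1 + b *\<^sub>R axis 2 1 + (c::real) *\<^sub>R (axis 3 1 :: real^3)"
  by (simp add: vec_eq_iff forall_3 axis_def)

theorem lemma9:
  fixes m n :: nat and F :: "nat \<Rightarrow> nat \<Rightarrow> real^3"
  assumes "dual_convex m n F"
  shows "flexible_I3 m n F \<longleftrightarrow>
         (\<exists>D. iso_isometric_deformation m n F D \<and> \<not> trivial_deformation m n F D \<and>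
              (\<forall>t\<in>{0..1}. v_parallel m n (D t) F))"
proof
  assume "\<exists>D. iso_isometric_deformation m n F D \<and> \<not> trivial_deformation m n F D \<and>
              (\<forall>t\<in>{0..1}. v_parallel m n (D t) F)"
  then show "flexible_I3 m n F" unfolding flexible_I3_def by blast
next
  note dc = assms
  have m2: "2 \<le> m" and n2: "2 \<le> n" using dc unfolding dual_convex_def by auto
  assume "flexible_I3 m n F"
  then obtain D where D: "iso_isometric_deformation m n F D" and nt: "\<not> trivial_deformation m n F D"
    unfolding flexible_I3_def by blast
  have net: "\<forall>t\<in>{0..1}. is_net m n (D t)"
   and init: "\<forall>i\<le>m. \<forall>j\<le>n. D 0 i j = F i j"
   and cont: "\<forall>i\<le>m. \<forall>j\<le>n. continuous_on {0..1} (\<lambda>t. D t i j)"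
   and cong: "\<forall>t\<in>{0..1}. \<forall>i<m. \<forall>j<n. \<exists>C. is_iso_congruence C \<and>
         C (F i j) = D t i j \<and> C (F (Suc i) j) = D t (Suc i) j \<and>
         C (F (Suc i) (Suc j)) = D t (Suc i) (Suc j) \<and> C (F i (Suc j)) = D t i (Suc j)"
   and curv: "\<forall>t\<in>{0..1}. \<forall>i j. non_boundary m n i j \<longrightarrow> curvature (D t) i j = curvature F i j"
    using D unfolding iso_isometric_deformation_def by blast+
  define cc where "cc t = ccp (F 0 0) (F 1 0) (D t 0 0) (D t 1 0)" for t
  define ss where "ss t = ssp (F 0 0) (F 1 0) (D t 0 0) (D t 1 0)" for t
  define G where "G t i j = corr (cc t) (ss t) (F 0 0) (D t 0 0) (D t i j)" for t i j
  have gm: "(cc t)\<^sup>2 + (ss t)\<^sup>2 = 1 \<and> (\<forall>i\<le>m. \<forall>j\<le>n. okp (cc t) (ss t) (F 0 0) (D t 0 0) (F i j) (D t i j))"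
    if t: "t \<in> {0..1}" for t
  proof -
    have cg: "\<forall>i<m. \<forall>j<n. \<exists>C. is_iso_congruence C \<and>
         C (F i j) = D t i j \<and> C (F (Suc i) j) = D t (Suc i) j \<and>
         C (F (Suc i) (Suc j)) = D t (Suc i) (Suc j) \<and> C (F i (Suc j)) = D t i (Suc j)"
      using cong t by blast
    show ?thesis using global_motion[OF dc cg] unfolding cc_def ss_def by blast
  qed
  have vp: "v_parallel m n (G t) F" if t: "t \<in> {0..1}" for t
    unfolding v_parallel_def G_def using gm[OF t] corr_okp by blast
  have G3: "G t i j $ 3 = D t i j $ 3" for t i j unfolding G_def corr_def by simp
  have cs1: "(cc t)\<^sup>2 + (- ss t)\<^sup>2 = 1" if t: "t \<in> {0..1}" for t using gm[OF t] by simp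
  have Grm: "G t = (\<lambda>i j. rmap (cc t) (- ss t) (F 0 0 $ 1 - cc t * D t 0 0 $ 1 - ss t * D t 0 0 $ 2)
       (F 0 0 $ 2 + ss t * D t 0 0 $ 1 - cc t * D t 0 0 $ 2) 0 0 0 (D t i j))" for t
    unfolding G_def[abs_def] corr_rmap ..
  have dnz: "(F 1 0 $ 1 - F 0 0 $ 1)\<^sup>2 + (F 1 0 $ 2 - F 0 0 $ 2)\<^sup>2 \<noteq> 0"
    using face_top_distinct(3)[OF dc, of 0 0] m2 n2 by (auto simp: sum_power2_eq_zero_iff)
  have Gdef: "iso_isometric_deformation m n F G"
    unfolding iso_isometric_deformation_def
  proof (intro conjI ballI allI impI)
    fix t :: real assume t: "t \<in> {0..1}"
    show "is_net m n (G t)" unfolding is_net_def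
    proof (intro allI impI)
      fix i j assume ij: "i < m" "j < n"
      have q: "convex_quad (D t i j) (D t (Suc i) j) (D t (Suc i) (Suc j)) (D t i (Suc j))"
        using net t ij unfolding is_net_def by blast
      show "convex_quad (G t i j) (G t (Suc i) j) (G t (Suc i) (Suc j)) (G t i (Suc j))"
        unfolding G_def
        by (rule quad_pres[OF corr_rmap corrinv_rmap corrinv_corr[OF conjunct1[OF gm[OF t]]] q])
    qed
  next
    fix i j assume ij: "i \<le> m" "j \<le> n"
    have "0 \<in> {0..1::real}" by simp
    then have "G 0 i j $ 1 = F i j $ 1 \<and> G 0 i j $ 2 = F i j $ 2" using vp ij unfolding v_parallel_def by blast
    moreover have "G 0 i j $ 3 = F i j $ 3" using G3 init ij by simp
    ultimately show "G 0 i j = F i j" by (simp add: vec_eq_iff forall_3)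
  next
    fix i j assume ij: "i \<le> m" "j \<le> n"
    have c00: "continuous_on {0..1} (\<lambda>t. D t 0 0)" and c10: "continuous_on {0..1} (\<lambda>t. D t 1 0)"
     and cij: "continuous_on {0..1} (\<lambda>t. D t i j)"
      using cont ij m2 n2 by auto
    have ccc: "continuous_on {0..1} cc" unfolding cc_def[abs_def] ccp_def
      using dnz by (intro continuous_intros c00 c10) auto
    have csc: "continuous_on {0..1} ss" unfolding ss_def[abs_def] ssp_def
      using dnz by (intro continuous_intros c00 c10) auto
    show "continuous_on {0..1} (\<lambda>t. G t i j)"
      unfolding G_def corr_def vector3_axis
      by (intro continuous_intros c00 cij ccc csc)
  next
    fix t :: real assume t: "t \<in> {0..1}"
    fix i j assume ij: "i < m" "j < n"
    obtain C where C: "is_iso_congruence C" "C (F i j) = D t i j" "C (F (Suc i) j) = D t (Suc i) j"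
         "C (F (Suc i) (Suc j)) = D t (Suc i) (Suc j)" "C (F i (Suc j)) = D t i (Suc j)"
      using cong t ij by blast
    let ?K = "\<lambda>x. corr (cc t) (ss t) (F 0 0) (D t 0 0) (C x)"
    have "is_iso_congruence ?K"
      by (rule iso_cong_comp[OF corr_iso[OF conjunct1[OF gm[OF t]]] C(1)])
    then show "\<exists>C. is_iso_congruence C \<and> C (F i j) = G t i j \<and> C (F (Suc i) j) = G t (Suc i) j \<and>
         C (F (Suc i) (Suc j)) = G t (Suc i) (Suc j) \<and> C (F i (Suc j)) = G t i (Suc j)"
      unfolding G_def using C by auto
  next
    fix t :: real assume t: "t \<in> {0..1}"
    fix i j assume nb: "non_boundary m n i j"
    have "curvature (G t) i j = curvature (D t) i j"
      unfolding Grm by (rule curv_rmap[OF cs1[OF t]])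
    then show "curvature (G t) i j = curvature F i j" using curv t nb by simp
  qed
  have Gnt: "\<not> trivial_deformation m n F G"
  proof
    assume "trivial_deformation m n F G"
    then have tr: "\<forall>t\<in>{0..1}. \<exists>C. is_iso_congruence C \<and> (\<forall>i\<le>m. \<forall>j\<le>n. G t i j = C (F i j))"
      unfolding trivial_deformation_def .
    have "trivial_deformation m n F D" unfolding trivial_deformation_def
    proof
      fix t :: real assume t: "t \<in> {0..1}"
      obtain C where C: "is_iso_congruence C" "\<forall>i\<le>m. \<forall>j\<le>n. G t i j = C (F i j)" using tr t by blast
      let ?K = "\<lambda>x. corrinv (cc t) (ss t) (F 0 0) (D t 0 0) (C x)"
      have "is_iso_congruence ?K"
        by (rule iso_cong_comp[OF corrinv_iso[OF conjunct1[OF gm[OF t]]] C(1)])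
      moreover have "\<forall>i\<le>m. \<forall>j\<le>n. D t i j = ?K (F i j)"
      proof (intro allI impI)
        fix i j assume "i \<le> m" "j \<le> n"
        then have "C (F i j) = G t i j" using C(2) by simp
        then show "D t i j = ?K (F i j)"
          unfolding G_def using corrinv_corr[OF conjunct1[OF gm[OF t]]] by simp
      qed
      ultimately show "\<exists>C. is_iso_congruence C \<and> (\<forall>i\<le>m. \<forall>j\<le>n. D t i j = C (F i j))" by blast
    qed
    then show False using nt by blast
  qed
  show "\<exists>D. iso_isometric_deformation m n F D \<and> \<not> trivial_deformation m n F D \<and>
              (\<forall>t\<in>{0..1}. v_parallel m n (D t) F)"
    using Gdef Gnt vp by blast
qed

end
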